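(* Let $r\in\mathcal R_n$ be a distance matrix of order $n$. For any two vectors $a=(a_1,\dots,a_n)\in A(r)$ and $b=(b_1,\dots,b_n)\in A(r)$ there exists a real number $h\ge0$ such that $\bar b=(b_1,\dots,b_n,h)\in A(r^a)$ (and also $\bar a=(a_1,\dots,a_n,h)\in A(r^b)$).
   Context: $\mathcal R_n$ is the set of real symmetric $n\times n$ matrices with zero diagonal, nonnegative entries and $r_{i,k}+r_{k,j}\ge r_{i,j}$. For $r\in\mathcal R_n$, $A(r)=\{a\in\mathbb R^n: |a_i-a_j|\le r_{i,j}\le a_i+a_j\ \forall i,j\}$ is the set of admissible vectors, and for $a\in A(r)$, $r^a\in\mathcal R_{n+1}$ is the matrix obtained by adding $a$ as last row and last column (with $0$ in the corner). *)

theory Defs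
  imports Main "HOL.Real"
begin

text \<open>Matrices of order n are functions nat => nat => real, only entries with
indices < n are meaningful; vectors of length n are functions nat => real,
only components with index < n are meaningful.\<close>

definition distmat :: "nat \<Rightarrow> (nat \<Rightarrow> nat \<Rightarrow> real) \<Rightarrow> bool" where
  "distmat n r \<longleftrightarrow>
     (\<forall>i<n. r i i = 0) \<and>
     (\<forall>i<n. \<forall>j<n. r i j = r j i) \<and>
     (\<forall>i<n. \<forall>j<n. r i j \<ge> 0) \<and>
     (\<forall>i<n. \<forall>j<n. \<forall>k<n. r i k + r k j \<ge> r i j)"

definition admissible :: "nat \<Rightarrow> (nat \<Rightarrow> nat \<Rightarrow> real) \<Rightarrow> (nat \<Rightarrow> real) \<Rightarrow> bool" where
  "admissible n r a \<longleftrightarrow>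
     (\<forall>i<n. \<forall>j<n. \<bar>a i - a j\<bar> \<le> r i j \<and> r i j \<le> a i + a j)"

definition extend :: "nat \<Rightarrow> (nat \<Rightarrow> nat \<Rightarrow> real) \<Rightarrow> (nat \<Rightarrow> real) \<Rightarrow> (nat \<Rightarrow> nat \<Rightarrow> real)" where
  "extend n r a = (\<lambda>i j. if i < n \<and> j < n then r i j
                         else if i < n \<and> j = n then a i
                         else if i = n \<and> j < n then a j
                         else 0)"

definition append_vec :: "nat \<Rightarrow> (nat \<Rightarrow> real) \<Rightarrow> real \<Rightarrow> (nat \<Rightarrow> real)" where
  "append_vec n v h = (\<lambda>i. if i < n then v i else h)"

end

theory Submission
  imports Defs
begin

theorem lemma3:
  fixes n :: nat and r :: "nat \<Rightarrow> nat \<Rightarrow> real" and a b :: "nat \<Rightarrow> real"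
  assumes "distmat n r"
    and "admissible n r a"
    and "admissible n r b"
  shows "\<exists>h::real. h \<ge> 0 \<and>
           admissible (Suc n) (extend n r a) (append_vec n b h) \<and>
           admissible (Suc n) (extend n r b) (append_vec n a h)"
proof -
  define S where "S = insert 0 ((\<lambda>i. \<bar>a i - b i\<bar>) ` {..<n})"
  define h where "h = Max S"
  have fin: "finite S" "S \<noteq> {}" unfolding S_def by auto
  have h0: "h \<ge> 0" unfolding h_def using fin by (simp add: S_def)
  have hi: "\<bar>a i - b i\<bar> \<le> h" if "i < n" for i
    unfolding h_def using fin that by (simp add: S_def)
  have A: "\<And>i j. i<n \<Longrightarrow> j<n \<Longrightarrow> \<bar>a i - a j\<bar> \<le> r i j \<and> r i j \<le> a i + a j"
    using assms(2) unfolding admissible_def by blast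
  have B: "\<And>i j. i<n \<Longrightarrow> j<n \<Longrightarrow> \<bar>b i - b j\<bar> \<le> r i j \<and> r i j \<le> b i + b j"
    using assms(3) unfolding admissible_def by blast
  have key: "\<bar>a i - b i\<bar> \<le> a j + b j" if "i<n" "j<n" for i j
  proof -
    have "a i - a j \<le> r i j" "a j - a i \<le> r i j" "r i j \<le> b i + b j"
      "b i - b j \<le> r i j" "b j - b i \<le> r i j" "r i j \<le> a i + a j"
      using A[OF that] B[OF that] by auto
    thus ?thesis by (simp add: abs_le_iff)
  qed
  have hj: "h \<le> a j + b j" if "j < n" for j
  proof -
    have "\<forall>x\<in>S. x \<le> a j + b j"
    proof
      fix x assume "x \<in> S"
      then consider "x = 0" | i where "i<n" "x = \<bar>a i - b i\<bar>" unfolding S_def by auto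
      then show "x \<le> a j + b j"
      proof cases
        case 1
        have "\<bar>a j - a j\<bar> \<le> r j j" "r j j \<le> a j + a j"
             "\<bar>b j - b j\<bar> \<le> r j j" "r j j \<le> b j + b j"
          using A[OF that that] B[OF that that] by auto
        then show ?thesis using 1 by simp
      next
        case 2 then show ?thesis using key that by simp
      qed
    qed
    then show ?thesis unfolding h_def using fin by simp
  qed
  have hi1: "a i - b i \<le> h" "b i - a i \<le> h" if "i<n" for i
    using hi[OF that] by (auto simp: abs_le_iff)
  show ?thesis
  proof (intro exI conjI)
    show "h \<ge> 0" by (rule h0)
    show "admissible (Suc n) (extend n r a) (append_vec n b h)"
      unfolding admissible_def
    proof (intro allI impI)
      fix i j assume "i < Suc n" "j < Suc n"
      then consider "i<n" "j<n" | "i<n" "j=n" | "i=n" "j<n" | "i=n" "j=n" by linarith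
      then show "\<bar>append_vec n b h i - append_vec n b h j\<bar> \<le> extend n r a i j \<and>
                 extend n r a i j \<le> append_vec n b h i + append_vec n b h j"
      proof cases
        case 1 then show ?thesis using B[OF 1] by (simp add: extend_def append_vec_def)
      next
        case 2 then show ?thesis using hi1[OF 2(1)] hj[OF 2(1)] h0
          by (simp add: extend_def append_vec_def abs_le_iff)
      next
        case 3 then show ?thesis using hi1[OF 3(2)] hj[OF 3(2)] h0
          by (simp add: extend_def append_vec_def abs_le_iff)
      next
        case 4 then show ?thesis using h0 by (simp add: extend_def append_vec_def)
      qed
    qed
    show "admissible (Suc n) (extend n r b) (append_vec n a h)"
      unfolding admissible_def
    proof (intro allI impI)
      fix i j assume "i < Suc n" "j < Suc n"
      then consider "i<n" "j<n" | "i<n" "j=n" | "i=n" "j<n" | "i=n" "j=n" by linarith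
      then show "\<bar>append_vec n a h i - append_vec n a h j\<bar> \<le> extend n r b i j \<and>
                 extend n r b i j \<le> append_vec n a h i + append_vec n a h j"
      proof cases
        case 1 then show ?thesis using A[OF 1] by (simp add: extend_def append_vec_def)
      next
        case 2 then show ?thesis using hi1[OF 2(1)] hj[OF 2(1)] h0
          by (simp add: extend_def append_vec_def abs_le_iff)
      next
        case 3 then show ?thesis using hi1[OF 3(2)] hj[OF 3(2)] h0
          by (simp add: extend_def append_vec_def abs_le_iff)
      next
        case 4 then show ?thesis using h0 by (simp add: extend_def append_vec_def)
      qed
    qed
  qed
qed

end
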